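(* Let $G$ be a locally compact group, $K$ a compact subgroup with normalized Haar measure $dk$, $\delta>0$, and $\mu$ a continuous unitary character of $G$. Let $f,g\in\mathcal{C}(G)$ with $f$ unbounded satisfy $$\Big|\int_K f(xkyk^{-1})\,dk+\mu(y)\int_K f(xky^{-1}k^{-1})\,dk-2f(x)g(y)\Big|\le\delta\quad\text{for all }x,y\in G.$$ Then for all $x,y\in G$, $$\int_K g(xkyk^{-1})\,dk+\mu(y)\int_K g(xky^{-1}k^{-1})\,dk+\int_K g(ykxk^{-1})\,dk+\mu(y)\int_K g(y^{-1}kxk^{-1})\,dk=4g(x)g(y).$$
   Context: A unitary character is a continuous homomorphism $\mu:G\to\{z\in\mathbb{C}:|z|=1\}$. *)

theory Defs
  imports "HOL-Analysis.Analysis" "HOL-Algebra.Group"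
begin

definition locally_compact_group :: "('a, 'b) monoid_scheme \<Rightarrow> 'a topology \<Rightarrow> bool" where
  "locally_compact_group G X \<longleftrightarrow>
     group G \<and> topspace X = carrier G \<and>
     continuous_map (prod_topology X X) X (\<lambda>(x, y). x \<otimes>\<^bsub>G\<^esub> y) \<and>
     continuous_map X X (\<lambda>x. inv\<^bsub>G\<^esub> x) \<and>
     Hausdorff_space X \<and> locally_compact_space X"

definition unitary_character :: "('a, 'b) monoid_scheme \<Rightarrow> 'a topology \<Rightarrow> ('a \<Rightarrow> complex) \<Rightarrow> bool" where
  "unitary_character G X \<mu> \<longleftrightarrow>
     continuous_map X euclidean \<mu> \<and>
     (\<forall>x\<in>carrier G. cmod (\<mu> x) = 1) \<and>
     (\<forall>x\<in>carrier G. \<forall>y\<in>carrier G. \<mu> (x \<otimes>\<^bsub>G\<^esub> y) = \<mu> x * \<mu> y)"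

text \<open>M is the normalized Haar measure of the compact subgroup K: a regular (Radon)
  left-invariant probability measure on the Borel sets of K.\<close>
definition normalized_haar :: "('a, 'b) monoid_scheme \<Rightarrow> 'a topology \<Rightarrow> 'a set \<Rightarrow> 'a measure \<Rightarrow> bool" where
  "normalized_haar G X K M \<longleftrightarrow>
     space M = K \<and>
     sets M = sigma_sets K {U. openin (subtopology X K) U} \<and>
     emeasure M K = 1 \<and>
     (\<forall>k\<in>K. \<forall>A\<in>sets M. emeasure M ((\<lambda>a. k \<otimes>\<^bsub>G\<^esub> a) ` A) = emeasure M A) \<and>
     (\<forall>A\<in>sets M. emeasure M A =
        (INF U\<in>{U. openin (subtopology X K) U \<and> A \<subseteq> U}. emeasure M U)) \<and>
     (\<forall>U. openin (subtopology X K) U \<longrightarrow>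
        emeasure M U = (SUP C\<in>{C. compactin X C \<and> C \<subseteq> U}. emeasure M C))"

end

theory Submission
  imports Defs
begin


locale cmeas =
  fixes T :: "'a topology" and M :: "'a measure"
  assumes cs: "compact_space T"
    and spM: "space M = topspace T"
    and sM: "sets M = sigma_sets (topspace T) {U. openin T U}"
    and emM: "emeasure M (topspace T) = 1"
begin

lemma prob: "finite_measure M"
  by (rule finite_measureI) (simp add: spM emM)

lemma meas1: "measure M (space M) = 1"
  by (simp add: measure_def spM emM)

lemma open_sets: "openin T U \<Longrightarrow> U \<in> sets M"
  by (simp add: sM)

lemma meas:
  assumes "continuous_map T euclidean \<phi>"
  shows "(\<phi> :: 'a \<Rightarrow> 'b::topological_space) \<in> borel_measurable M"
proof (rule borel_measurableI)
  fix S :: "'b set" assume "open S"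
  then have "openin T {x \<in> topspace T. \<phi> x \<in> S}"
    using assms openin_continuous_map_preimage by fastforce
  moreover have "\<phi> -` S \<inter> space M = {x \<in> topspace T. \<phi> x \<in> S}" using spM by auto
  ultimately show "\<phi> -` S \<inter> space M \<in> sets M" using open_sets by simp
qed

lemma bnd:
  assumes "continuous_map T euclidean (\<phi> :: 'a \<Rightarrow> 'b::metric_space)"
  shows "bounded (\<phi> ` topspace T)"
proof -
  have "compactin euclidean (\<phi> ` topspace T)"
    using image_compactin cs assms compact_space_def by blast
  then show ?thesis by (simp add: compact_imp_bounded)
qed

lemma integ:
  assumes "continuous_map T euclidean (\<phi> :: 'a \<Rightarrow> 'b::{banach,second_countable_topology})"
  shows "integrable M \<phi>"
proof -
  interpret finite_measure M by (rule prob)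
  obtain B where B: "\<And>x. x \<in> topspace T \<Longrightarrow> norm (\<phi> x) \<le> B"
    using bnd[OF assms] by (meson bounded_iff imageI)
  show ?thesis
    by (rule integrable_const_bound[where B=B]) (auto simp: spM B meas assms)
qed

lemma int_diff_bound:
  fixes f g :: "'a \<Rightarrow> 'b::{banach,second_countable_topology}"
  assumes "integrable M f" "integrable M g" "\<And>x. x \<in> topspace T \<Longrightarrow> norm (f x - g x) \<le> e"
  shows "norm (integral\<^sup>L M f - integral\<^sup>L M g) \<le> e"
proof -
  interpret finite_measure M by (rule prob)
  have "norm (integral\<^sup>L M f - integral\<^sup>L M g) = norm (LINT x|M. f x - g x)"
    using assms by (simp add: integral_diff)
  also have "\<dots> \<le> (LINT x|M. norm (f x - g x))" by (rule integral_norm_bound)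
  also have "\<dots> \<le> (LINT x|M. e)"
    using assms by (intro integral_mono) (auto simp: spM)
  also have "\<dots> = e" by (simp add: meas1)
  finally show ?thesis .
qed


lemma cont_sw:
  assumes "continuous_map (prod_topology T T) euclidean (\<lambda>p. \<Phi> (fst p) (snd p))"
  shows "continuous_map (prod_topology T T) euclidean (\<lambda>p. \<Phi> (snd p) (fst p))"
proof -
  have "continuous_map (prod_topology T T) (prod_topology T T) (\<lambda>p. (snd p, fst p))"
    by (intro continuous_map_pairedI continuous_map_fst continuous_map_snd)
  from continuous_map_compose[OF this assms] show ?thesis by (simp add: o_def)
qed

lemma cont_sec:
  assumes "continuous_map (prod_topology T T) euclidean (\<lambda>p. \<Phi> (fst p) (snd p))"
    and "k \<in> topspace T"
  shows "continuous_map T euclidean (\<lambda>h. \<Phi> h k)"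
proof -
  have "continuous_map T (prod_topology T T) (\<lambda>h. (h, k))"
    using assms(2) by (intro continuous_map_pairedI continuous_map_id continuous_map_const[THEN iffD2]) auto
  from continuous_map_compose[OF this assms(1)] show ?thesis by (simp add: o_def)
qed

lemma tube:
  fixes \<Phi> :: "'a \<Rightarrow> 'a \<Rightarrow> 'b::real_normed_vector"
  assumes \<Phi>: "continuous_map (prod_topology T T) euclidean (\<lambda>p. \<Phi> (fst p) (snd p))"
    and e: "e > 0" and k0: "k0 \<in> topspace T"
  shows "\<exists>V. openin T V \<and> k0 \<in> V \<and> (\<forall>h\<in>topspace T. \<forall>k\<in>V. norm (\<Phi> h k - \<Phi> h k0) < e)"
proof -
  define W where "W = {p \<in> topspace (prod_topology T T). \<Phi> (fst p) (snd p) - \<Phi> (fst p) k0 \<in> ball 0 e}"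
  have c2: "continuous_map (prod_topology T T) euclidean (\<lambda>p. \<Phi> (fst p) k0)"
  proof -
    have "continuous_map (prod_topology T T) (prod_topology T T) (\<lambda>p. (fst p, k0))"
      using k0 by (intro continuous_map_pairedI continuous_map_fst continuous_map_const[THEN iffD2]) auto
    from continuous_map_compose[OF this \<Phi>] show ?thesis by (simp add: o_def)
  qed
  have "continuous_map (prod_topology T T) euclidean (\<lambda>p. \<Phi> (fst p) (snd p) - \<Phi> (fst p) k0)"
    using \<Phi> c2 by (intro continuous_map_diff)
  then have W: "openin (prod_topology T T) W"
    unfolding W_def by (rule openin_continuous_map_preimage) auto
  have C: "compactin T (topspace T)" using cs compact_space_def by blast
  have sub: "topspace T \<times> {k0} \<subseteq> W" using k0 e by (auto simp: W_def)
  obtain U V where UV: "openin T U" "openin T V" "topspace T \<subseteq> U" "k0 \<in> V" "U \<times> V \<subseteq> W"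
    using tube_lemma_left[OF W C k0 sub] by blast
  show ?thesis
  proof (intro exI conjI ballI)
    fix h k assume "h \<in> topspace T" "k \<in> V"
    then have "(h, k) \<in> W" using UV by auto
    then show "norm (\<Phi> h k - \<Phi> h k0) < e" by (auto simp: W_def dist_norm norm_minus_commute)
  qed (use UV in auto)
qed

lemma cont_int:
  fixes \<Phi> :: "'a \<Rightarrow> 'a \<Rightarrow> 'b::{banach,second_countable_topology}"
  assumes \<Phi>: "continuous_map (prod_topology T T) euclidean (\<lambda>p. \<Phi> (fst p) (snd p))"
  shows "continuous_map T euclidean (\<lambda>k. LINT h|M. \<Phi> h k)"
  unfolding mtopology_is_euclidean[symmetric] Met_TC.continuous_map_to_metric
proof (intro ballI allI impI)
  fix k0 and e :: real assume k0: "k0 \<in> topspace T" and e: "e > 0"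
  obtain V where V: "openin T V" "k0 \<in> V" "\<And>h k. h \<in> topspace T \<Longrightarrow> k \<in> V \<Longrightarrow> norm (\<Phi> h k - \<Phi> h k0) < e/2"
    using tube[OF \<Phi>, of "e/2" k0] e k0 by auto
  show "\<exists>U. openin T U \<and> k0 \<in> U \<and> (\<forall>y\<in>U. (LINT h|M. \<Phi> h y) \<in> Met_TC.mball (LINT h|M. \<Phi> h k0) e)"
  proof (intro exI conjI ballI)
    fix k assume k: "k \<in> V"
    then have kT: "k \<in> topspace T" using V openin_subset by blast
    have "norm ((LINT h|M. \<Phi> h k) - (LINT h|M. \<Phi> h k0)) \<le> e/2"
      using V(3)[OF _ k] by (intro int_diff_bound integ cont_sec[OF \<Phi>] kT k0) (auto intro: less_imp_le)
    then show "(LINT h|M. \<Phi> h k) \<in> Met_TC.mball (LINT h|M. \<Phi> h k0) e"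
      using e by (simp add: dist_norm norm_minus_commute)
  qed (use V in auto)
qed

lemma small_eq0:
  fixes x :: "'b::real_normed_vector"
  assumes "\<And>e. e > 0 \<Longrightarrow> norm x \<le> 2 * e"
  shows "x = 0"
proof (rule ccontr)
  assume "x \<noteq> 0"
  then have "norm x > 0" by simp
  from assms[of "norm x / 4"] this show False by simp
qed


lemma fubini:
  fixes \<Phi> :: "'a \<Rightarrow> 'a \<Rightarrow> 'b::{banach,second_countable_topology}"
  assumes \<Phi>: "continuous_map (prod_topology T T) euclidean (\<lambda>p. \<Phi> (fst p) (snd p))"
  shows "(LINT k|M. LINT h|M. \<Phi> h k) = (LINT h|M. LINT k|M. \<Phi> h k)"
proof -
  interpret finite_measure M by (rule prob)
  have \<Phi>': "continuous_map (prod_topology T T) euclidean (\<lambda>p. \<Phi> (snd p) (fst p))"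
    using cont_sw[OF \<Phi>] .
  have I1: "integrable M (\<lambda>k. LINT h|M. \<Phi> h k)" by (intro integ cont_int \<Phi>)
  have I2: "integrable M (\<lambda>h. LINT k|M. \<Phi> h k)" using integ[OF cont_int[OF \<Phi>']] by simp
  have secI: "\<And>k. k \<in> topspace T \<Longrightarrow> integrable M (\<lambda>h. \<Phi> h k)" by (intro integ cont_sec[OF \<Phi>])
  have secI': "\<And>h. h \<in> topspace T \<Longrightarrow> integrable M (\<lambda>k. \<Phi> h k)"
    using cont_sec[OF \<Phi>'] integ by auto
  have "(LINT k|M. LINT h|M. \<Phi> h k) - (LINT h|M. LINT k|M. \<Phi> h k) = 0"
  proof (rule small_eq0)
    fix e :: real assume e: "e > 0"
    have "\<forall>k0\<in>topspace T. \<exists>V. openin T V \<and> k0 \<in> V \<and> (\<forall>h\<in>topspace T. \<forall>k\<in>V. norm (\<Phi> h k - \<Phi> h k0) < e)"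
      using tube[OF \<Phi> e] by blast
    then obtain V where V: "\<And>k0. k0 \<in> topspace T \<Longrightarrow> openin T (V k0) \<and> k0 \<in> V k0 \<and> (\<forall>h\<in>topspace T. \<forall>k\<in>V k0. norm (\<Phi> h k - \<Phi> h k0) < e)"
      by metis
    have "compactin T (topspace T)" using cs compact_space_def by blast
    then obtain F where F: "finite F" "F \<subseteq> V ` topspace T" "topspace T \<subseteq> \<Union>F"
      using compactinD[of T "topspace T" "V ` topspace T"] V by blast
    then obtain C where C: "C \<subseteq> topspace T" "finite C" "F = V ` C"
      by (meson finite_subset_image)
    obtain n :: nat and p where np: "C = p ` {i. i < n}"
      using finite_imp_nat_seg_image_inj_on[OF C(2)] by blast
    have pT: "\<And>i. i < n \<Longrightarrow> p i \<in> topspace T" using np C by auto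
    define A where "A i = V (p i) - (\<Union>j\<in>{..<i}. V (p j))" for i
    have VT: "\<And>i. i < n \<Longrightarrow> V (p i) \<subseteq> topspace T" using V pT openin_subset by blast
    have Vs: "\<And>i. i < n \<Longrightarrow> V (p i) \<in> sets M" using V pT open_sets by blast
    have As: "\<And>i. i < n \<Longrightarrow> A i \<in> sets M"
      unfolding A_def using Vs by (intro sets.Diff sets.finite_UN) auto
    have AT: "\<And>i. i < n \<Longrightarrow> A i \<subseteq> topspace T" using VT by (auto simp: A_def)
    have cov: "\<And>k. k \<in> topspace T \<Longrightarrow> \<exists>i<n. k \<in> V (p i)"
      using F C np by blast
    have exA: "\<exists>i<n. k \<in> A i" if k: "k \<in> topspace T" for k
    proof -
      define i where "i = (LEAST i. i < n \<and> k \<in> V (p i))"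
      have "i < n \<and> k \<in> V (p i)" unfolding i_def using cov[OF k] by (rule LeastI_ex) 
      moreover have "\<And>j. j < i \<Longrightarrow> k \<notin> V (p j)"
        using not_less_Least i_def \<open>i < n \<and> k \<in> V (p i)\<close> by fastforce
      ultimately show ?thesis by (auto simp: A_def)
    qed
    have uniqA: "\<And>i j k. k \<in> A i \<Longrightarrow> k \<in> A j \<Longrightarrow> i = j"
      by (auto simp: A_def) (metis lessThan_iff nat_neq_iff)
    have ind: "(\<Sum>j<n. indicator (A j) k *\<^sub>R c j) = c i" if "i < n" "k \<in> A i" for k i and c :: "nat \<Rightarrow> 'b"
    proof -
      have "(\<Sum>j<n. indicator (A j) k *\<^sub>R c j) = (\<Sum>j<n. if j = i then c j else 0)"
        using uniqA that by (intro sum.cong) (auto simp: indicator_def)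
      also have "\<dots> = c i" using that by simp
      finally show ?thesis .
    qed
    have approx: "norm (\<Phi> h k - (\<Sum>j<n. indicator (A j) k *\<^sub>R \<Phi> h (p j))) \<le> e"
      if h: "h \<in> topspace T" and k: "k \<in> topspace T" for h k
    proof -
      obtain i where i: "i < n" "k \<in> A i" using exA[OF k] by blast
      then have "k \<in> V (p i)" by (auto simp: A_def)
      then have "norm (\<Phi> h k - \<Phi> h (p i)) < e" using V[OF pT[OF i(1)]] h by blast
      then show ?thesis using ind[OF i, of "\<lambda>j. \<Phi> h (p j)"] by simp
    qed
    have indI: "\<And>j. j < n \<Longrightarrow> integrable M (indicator (A j) :: 'a \<Rightarrow> real)"
      using As by (intro integrable_real_indicator) (auto simp: less_top[symmetric])
    define I where "I j = (LINT h|M. \<Phi> h (p j))" for j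
    define m where "m j = measure M (A j)" for j
    have L1: "norm ((LINT h|M. \<Phi> h k) - (\<Sum>j<n. indicator (A j) k *\<^sub>R I j)) \<le> e"
      if k: "k \<in> topspace T" for k
    proof -
      have "(\<Sum>j<n. indicator (A j) k *\<^sub>R I j) = (LINT h|M. (\<Sum>j<n. indicator (A j) k *\<^sub>R \<Phi> h (p j)))"
        using secI pT Bochner_Integration.integral_sum[where I="{..<n}" and M=M and f="\<lambda>j h. indicator (A j) k *\<^sub>R \<Phi> h (p j)"]
        by (auto simp: I_def)
      moreover have "norm ((LINT h|M. \<Phi> h k) - (LINT h|M. (\<Sum>j<n. indicator (A j) k *\<^sub>R \<Phi> h (p j)))) \<le> e"
        using approx k secI pT by (intro int_diff_bound) auto
      ultimately show ?thesis by simp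
    qed
    have L2: "norm ((LINT k|M. LINT h|M. \<Phi> h k) - (LINT k|M. (\<Sum>j<n. indicator (A j) k *\<^sub>R I j))) \<le> e"
    proof -
      have "integrable M (\<lambda>k. \<Sum>j<n. indicator (A j) k *\<^sub>R I j)"
        by (rule Bochner_Integration.integrable_sum, rule integrable_scaleR_left, rule indI) auto
      from int_diff_bound[OF I1 this L1] show ?thesis .
    qed
    have L3: "(LINT k|M. (\<Sum>j<n. indicator (A j) k *\<^sub>R I j)) = (\<Sum>j<n. m j *\<^sub>R I j)"
    proof -
      have "(LINT k|M. (\<Sum>j<n. indicator (A j) k *\<^sub>R I j)) = (\<Sum>j<n. LINT k|M. indicator (A j) k *\<^sub>R I j)"
        using indI by (intro Bochner_Integration.integral_sum) auto
      also have "\<dots> = (\<Sum>j<n. m j *\<^sub>R I j)"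
        using indI AT spM by (intro sum.cong refl) (auto simp: m_def Int_absorb2)
      finally show ?thesis .
    qed
    have R1: "norm ((LINT k|M. \<Phi> h k) - (\<Sum>j<n. m j *\<^sub>R \<Phi> h (p j))) \<le> e"
      if h: "h \<in> topspace T" for h
    proof -
      have "(\<Sum>j<n. m j *\<^sub>R \<Phi> h (p j)) = (\<Sum>j<n. LINT k|M. indicator (A j) k *\<^sub>R \<Phi> h (p j))"
        using indI AT spM by (intro sum.cong refl) (auto simp: m_def Int_absorb2)
      also have "\<dots> = (LINT k|M. (\<Sum>j<n. indicator (A j) k *\<^sub>R \<Phi> h (p j)))"
        using indI by (intro Bochner_Integration.integral_sum[symmetric]) auto
      finally have "(\<Sum>j<n. m j *\<^sub>R \<Phi> h (p j)) = (LINT k|M. (\<Sum>j<n. indicator (A j) k *\<^sub>R \<Phi> h (p j)))" .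
      moreover have "norm ((LINT k|M. \<Phi> h k) - (LINT k|M. (\<Sum>j<n. indicator (A j) k *\<^sub>R \<Phi> h (p j)))) \<le> e"
      proof -
        have "integrable M (\<lambda>k. \<Sum>j<n. indicator (A j) k *\<^sub>R \<Phi> h (p j))"
          by (rule Bochner_Integration.integrable_sum, rule integrable_scaleR_left, rule indI) auto
        from int_diff_bound[OF secI'[OF h] this approx[OF h]] show ?thesis .
      qed
      ultimately show ?thesis by simp
    qed
    have R2: "norm ((LINT h|M. LINT k|M. \<Phi> h k) - (LINT h|M. (\<Sum>j<n. m j *\<^sub>R \<Phi> h (p j)))) \<le> e"
      using R1 I2 secI pT by (intro int_diff_bound) auto
    have R3: "(LINT h|M. (\<Sum>j<n. m j *\<^sub>R \<Phi> h (p j))) = (\<Sum>j<n. m j *\<^sub>R I j)"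
      using secI pT Bochner_Integration.integral_sum[where I="{..<n}" and M=M and f="\<lambda>j h. m j *\<^sub>R \<Phi> h (p j)"]
      by (auto simp: I_def)
    show "norm ((LINT k|M. LINT h|M. \<Phi> h k) - (LINT h|M. LINT k|M. \<Phi> h k)) \<le> 2 * e"
      using L2 L3 R2 R3 norm_triangle_ineq4[of "(LINT k|M. LINT h|M. \<Phi> h k) - (\<Sum>j<n. m j *\<^sub>R I j)"
          "(LINT h|M. LINT k|M. \<Phi> h k) - (\<Sum>j<n. m j *\<^sub>R I j)"]
      by (simp add: algebra_simps)
  qed
  then show ?thesis by simp
qed

end

lemma (in group) canc1: "a \<in> carrier G \<Longrightarrow> b \<in> carrier G \<Longrightarrow> inv a \<otimes> (a \<otimes> b) = b"
  by (simp add: m_assoc[symmetric])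
lemma (in group) canc2: "a \<in> carrier G \<Longrightarrow> b \<in> carrier G \<Longrightarrow> a \<otimes> (inv a \<otimes> b) = b"
  by (simp add: m_assoc[symmetric])

locale setting =
  fixes G :: "('a, 'b) monoid_scheme" (structure) and X :: "'a topology" and K :: "'a set" and M :: "'a measure"
  assumes lcg: "locally_compact_group G X"
    and sub: "subgroup K G" and cK: "compactin X K"
    and haar: "normalized_haar G X K M"
begin

abbreviation "T \<equiv> subtopology X K"

lemma grp: "group G" using lcg by (simp add: locally_compact_group_def)
lemma topX: "topspace X = carrier G" using lcg by (simp add: locally_compact_group_def)
lemma Kc: "K \<subseteq> carrier G" using sub subgroup.subset by blast
lemma topT: "topspace T = K" using Kc topX by auto

lemma cmeas: "cmeas T M"
  unfolding cmeas_def using haar cK topT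
  by (auto simp: normalized_haar_def compact_space_subtopology)

lemma inv_meas: "k \<in> K \<Longrightarrow> A \<in> sets M \<Longrightarrow> emeasure M ((\<lambda>a. k \<otimes>\<^bsub>G\<^esub> a) ` A) = emeasure M A"
  using haar by (simp add: normalized_haar_def)

lemma cm_mult:
  assumes "continuous_map Z X a" "continuous_map Z X b"
  shows "continuous_map Z X (\<lambda>z. a z \<otimes>\<^bsub>G\<^esub> b z)"
proof -
  have m: "continuous_map (prod_topology X X) X (\<lambda>(x, y). x \<otimes>\<^bsub>G\<^esub> y)"
    using lcg by (simp add: locally_compact_group_def)
  from continuous_map_compose[OF continuous_map_pairedI[OF assms] m] show ?thesis
    by (simp add: o_def)
qed

lemma cm_inv:
  assumes "continuous_map Z X a"
  shows "continuous_map Z X (\<lambda>z. inv\<^bsub>G\<^esub> (a z))"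
proof -
  have m: "continuous_map X X (\<lambda>x. inv\<^bsub>G\<^esub> x)"
    using lcg by (simp add: locally_compact_group_def)
  from continuous_map_compose[OF assms m] show ?thesis by (simp add: o_def)
qed

lemma cm_const: "c \<in> carrier G \<Longrightarrow> continuous_map Z X (\<lambda>z. c)"
  by (simp add: topX)

lemma cm_T: "continuous_map T X (\<lambda>k. k)"
  by (simp add: continuous_map_from_subtopology)

lemma cm_fst: "continuous_map (prod_topology T T) X fst"
  using continuous_map_compose[OF continuous_map_fst cm_T] by (simp add: o_def)

lemma cm_snd: "continuous_map (prod_topology T T) X snd"
  using continuous_map_compose[OF continuous_map_snd cm_T] by (simp add: o_def)

lemma cm_e:
  assumes "continuous_map X euclidean f" "continuous_map Z X a"
  shows "continuous_map Z euclidean (\<lambda>z. f (a z))"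
  using continuous_map_compose[OF assms(2,1)] by (simp add: o_def)

lemma linv:
  assumes h: "h \<in> K" and \<phi>: "continuous_map T euclidean (\<phi> :: 'a \<Rightarrow> 'c::{banach,second_countable_topology})"
  shows "(LINT k|M. \<phi> (h \<otimes>\<^bsub>G\<^esub> k)) = (LINT k|M. \<phi> k)"
proof -
  interpret group G by (rule grp)
  interpret cmeas T M by (rule cmeas)
  have hc: "h \<in> carrier G" using h Kc by auto
  have ct: "continuous_map T T (\<lambda>k. h \<otimes> k)"
    unfolding continuous_map_in_subtopology
    using h sub topT by (auto intro!: cm_mult cm_const hc cm_T simp: subgroup.m_closed)
  have lm: "(\<lambda>k. h \<otimes> k) \<in> measurable M M"
  proof (rule measurable_sigma_sets[OF sM])
    show "{U. openin T U} \<subseteq> Pow (topspace T)" using openin_subset[of T] by blast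
    show "(\<lambda>k. h \<otimes> k) \<in> space M \<rightarrow> topspace T"
      using ct by (auto simp: spM continuous_map_def)
    fix U assume "U \<in> {U. openin T U}"
    then have "openin T {x \<in> topspace T. h \<otimes> x \<in> U}"
      using ct openin_continuous_map_preimage by fastforce
    moreover have "(\<lambda>k. h \<otimes> k) -` U \<inter> space M = {x \<in> topspace T. h \<otimes> x \<in> U}" using spM by auto
    ultimately show "(\<lambda>k. h \<otimes> k) -` U \<inter> space M \<in> sets M" using open_sets by simp
  qed
  have d: "distr M M (\<lambda>k. h \<otimes> k) = M"
  proof (rule measure_eqI)
    fix A assume A: "A \<in> sets (distr M M (\<lambda>k. h \<otimes> k))"
    then have A': "A \<in> sets M" by simp
    then have AK: "A \<subseteq> K" using sets.sets_into_space spM topT by blast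
    have eq: "(\<lambda>k. h \<otimes> k) -` A \<inter> space M = (\<lambda>a. inv h \<otimes> a) ` A"
    proof
      show "(\<lambda>k. h \<otimes> k) -` A \<inter> space M \<subseteq> (\<lambda>a. inv h \<otimes> a) ` A"
      proof
        fix x assume x: "x \<in> (\<lambda>k. h \<otimes> k) -` A \<inter> space M"
        then have "x \<in> carrier G" using spM topT Kc by auto
        then have "x = inv h \<otimes> (h \<otimes> x)" using hc by (simp add: canc1)
        then show "x \<in> (\<lambda>a. inv h \<otimes> a) ` A" using x by blast
      qed
      show "(\<lambda>a. inv h \<otimes> a) ` A \<subseteq> (\<lambda>k. h \<otimes> k) -` A \<inter> space M"
      proof
        fix x assume "x \<in> (\<lambda>a. inv h \<otimes> a) ` A"
        then obtain a where a: "a \<in> A" "x = inv h \<otimes> a" by blast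
        have "a \<in> carrier G" using a AK Kc by auto
        moreover have ih: "inv h \<in> K" by (rule subgroup.m_inv_closed[OF sub h])
        moreover have "inv h \<otimes> a \<in> K" using a AK by (intro subgroup.m_closed[OF sub ih]) auto
        ultimately show "x \<in> (\<lambda>k. h \<otimes> k) -` A \<inter> space M" using a hc by (simp add: canc2 spM topT topX)
      qed
    qed
    have "inv h \<in> K" using h sub by (simp add: subgroup.m_inv_closed)
    then show "emeasure (distr M M (\<lambda>k. h \<otimes> k)) A = emeasure M A"
      using A' lm by (simp add: emeasure_distr eq inv_meas)
  qed simp
  have "(LINT k|M. \<phi> (h \<otimes> k)) = integral\<^sup>L (distr M M (\<lambda>k. h \<otimes> k)) \<phi>"
    by (rule integral_distr[OF lm meas[OF \<phi>], symmetric])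
  then show ?thesis by (simp add: d)
qed

end

sublocale setting \<subseteq> cmeas T M by (rule cmeas)


sublocale setting \<subseteq> group G by (rule grp)

context setting begin
lemma Kc': "k \<in> K \<Longrightarrow> k \<in> carrier G" using Kc by auto
end

locale mainloc = setting +
  fixes \<mu> f g :: "'a \<Rightarrow> complex" and \<delta> :: real
  assumes uc: "unitary_character G X \<mu>"
    and fc: "continuous_map X euclidean f" and gc: "continuous_map X euclidean g"
    and H: "\<forall>x\<in>carrier G. \<forall>y\<in>carrier G.
           cmod ((LINT k|M. f (x \<otimes>\<^bsub>G\<^esub> k \<otimes>\<^bsub>G\<^esub> y \<otimes>\<^bsub>G\<^esub> inv\<^bsub>G\<^esub> k))
               + \<mu> y * (LINT k|M. f (x \<otimes>\<^bsub>G\<^esub> k \<otimes>\<^bsub>G\<^esub> inv\<^bsub>G\<^esub> y \<otimes>\<^bsub>G\<^esub> inv\<^bsub>G\<^esub> k))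
               - 2 * f x * g y) \<le> \<delta>"
begin

definition "Pf \<phi> a b = (LINT k|M. \<phi> (a \<otimes> k \<otimes> b \<otimes> inv k))"

lemma Hp: "x \<in> carrier G \<Longrightarrow> y \<in> carrier G \<Longrightarrow> cmod (Pf f x y + \<mu> y * Pf f x (inv y) - 2 * f x * g y) \<le> \<delta>"
  using H by (simp add: Pf_def)

lemma mu_mult: "a \<in> carrier G \<Longrightarrow> b \<in> carrier G \<Longrightarrow> \<mu> (a \<otimes> b) = \<mu> a * \<mu> b"
  using uc by (simp add: unitary_character_def)
lemma mu_norm: "a \<in> carrier G \<Longrightarrow> cmod (\<mu> a) = 1"
  using uc by (simp add: unitary_character_def)
lemma mu_one: "\<mu> \<one> = 1"
proof -
  have "\<mu> \<one> = \<mu> \<one> * \<mu> \<one>" using mu_mult[of \<one> \<one>] by simp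
  moreover have "\<mu> \<one> \<noteq> 0" using mu_norm[of \<one>] by auto
  ultimately show ?thesis by (metis mult_cancel_left1)
qed
lemma mu_inv: "a \<in> carrier G \<Longrightarrow> \<mu> a * \<mu> (inv a) = 1"
  using mu_mult[of a "inv a"] mu_one by simp
lemma mu_conj: "a \<in> carrier G \<Longrightarrow> b \<in> carrier G \<Longrightarrow> \<mu> (a \<otimes> k \<otimes> b \<otimes> inv k) = \<mu> a * \<mu> b" if "k \<in> carrier G"
  using that mu_mult mu_inv by (simp add: mult.assoc mult.left_commute)

lemmas cmI = cm_mult cm_inv cm_const cm_fst cm_snd cm_T

lemma int1:
  assumes "continuous_map X euclidean \<phi>" "a \<in> carrier G" "b \<in> carrier G"
  shows "integrable M (\<lambda>k. (\<phi> :: 'a \<Rightarrow> complex) (a \<otimes> k \<otimes> b \<otimes> inv k))"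
  by (intro integ cm_e[OF assms(1)] cmI assms)


lemma stepA:
  assumes x: "x \<in> carrier G" and a: "a \<in> carrier G" and b: "b \<in> carrier G"
  shows "cmod (2 * f x * Pf g a b - ((LINT k|M. Pf f x (a \<otimes> k \<otimes> b \<otimes> inv k))
            + \<mu> a * \<mu> b * (LINT k|M. Pf f x (inv (a \<otimes> k \<otimes> b \<otimes> inv k))))) \<le> \<delta>"
proof -
  have c1: "continuous_map T euclidean (\<lambda>k. LINT h|M. f (x \<otimes> h \<otimes> (a \<otimes> k \<otimes> b \<otimes> inv k) \<otimes> inv h))"
    by (rule cont_int[of "\<lambda>h k. f (x \<otimes> h \<otimes> (a \<otimes> k \<otimes> b \<otimes> inv k) \<otimes> inv h)", simplified])
       (intro cm_e[OF fc] cmI x a b)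
  have c2: "continuous_map T euclidean (\<lambda>k. LINT h|M. f (x \<otimes> h \<otimes> inv (a \<otimes> k \<otimes> b \<otimes> inv k) \<otimes> inv h))"
    by (rule cont_int[of "\<lambda>h k. f (x \<otimes> h \<otimes> inv (a \<otimes> k \<otimes> b \<otimes> inv k) \<otimes> inv h)", simplified])
       (intro cm_e[OF fc] cmI x a b)
  have i1: "integrable M (\<lambda>k. Pf f x (a \<otimes> k \<otimes> b \<otimes> inv k))"
    unfolding Pf_def by (rule integ[OF c1])
  have i2: "integrable M (\<lambda>k. Pf f x (inv (a \<otimes> k \<otimes> b \<otimes> inv k)))"
    unfolding Pf_def by (rule integ[OF c2])
  have ig: "integrable M (\<lambda>k. g (a \<otimes> k \<otimes> b \<otimes> inv k))" by (rule int1[OF gc a b])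
  have e1: "2 * f x * Pf g a b = (LINT k|M. 2 * f x * g (a \<otimes> k \<otimes> b \<otimes> inv k))"
    by (simp add: Pf_def)
  have e2: "(LINT k|M. Pf f x (a \<otimes> k \<otimes> b \<otimes> inv k))
            + \<mu> a * \<mu> b * (LINT k|M. Pf f x (inv (a \<otimes> k \<otimes> b \<otimes> inv k)))
     = (LINT k|M. Pf f x (a \<otimes> k \<otimes> b \<otimes> inv k) + \<mu> a * \<mu> b * Pf f x (inv (a \<otimes> k \<otimes> b \<otimes> inv k)))"
    using i1 i2 by simp
  have "cmod ((LINT k|M. 2 * f x * g (a \<otimes> k \<otimes> b \<otimes> inv k)) -
     (LINT k|M. Pf f x (a \<otimes> k \<otimes> b \<otimes> inv k) + \<mu> a * \<mu> b * Pf f x (inv (a \<otimes> k \<otimes> b \<otimes> inv k)))) \<le> \<delta>"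
  proof (rule int_diff_bound)
    show "integrable M (\<lambda>k. 2 * f x * g (a \<otimes> k \<otimes> b \<otimes> inv k))" using ig by simp
    show "integrable M (\<lambda>k. Pf f x (a \<otimes> k \<otimes> b \<otimes> inv k) + \<mu> a * \<mu> b * Pf f x (inv (a \<otimes> k \<otimes> b \<otimes> inv k)))"
      using i1 i2 by simp
    fix k assume "k \<in> topspace T"
    then have k: "k \<in> carrier G" using topT Kc by auto
    have w: "a \<otimes> k \<otimes> b \<otimes> inv k \<in> carrier G" using a b k by simp
    show "cmod (2 * f x * g (a \<otimes> k \<otimes> b \<otimes> inv k) -
       (Pf f x (a \<otimes> k \<otimes> b \<otimes> inv k) + \<mu> a * \<mu> b * Pf f x (inv (a \<otimes> k \<otimes> b \<otimes> inv k)))) \<le> \<delta>"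
      using Hp[OF x w] mu_conj[OF k a b] by (simp add: norm_minus_commute)
  qed
  then show ?thesis by (simp only: e1 e2)
qed


lemma stepB:
  assumes x: "x \<in> carrier G" and a: "a \<in> carrier G" and b: "b \<in> carrier G"
  shows "(LINT k|M. Pf f x (a \<otimes> k \<otimes> b \<otimes> inv k)) = (LINT h|M. Pf f (x \<otimes> h \<otimes> a \<otimes> inv h) b)"
proof -
  have "(LINT k|M. Pf f x (a \<otimes> k \<otimes> b \<otimes> inv k)) =
        (LINT k|M. LINT h|M. f (x \<otimes> h \<otimes> (a \<otimes> k \<otimes> b \<otimes> inv k) \<otimes> inv h))"
    by (simp add: Pf_def)
  also have "\<dots> = (LINT h|M. LINT k|M. f (x \<otimes> h \<otimes> (a \<otimes> k \<otimes> b \<otimes> inv k) \<otimes> inv h))"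
    by (rule fubini[of "\<lambda>h k. f (x \<otimes> h \<otimes> (a \<otimes> k \<otimes> b \<otimes> inv k) \<otimes> inv h)"])
       (intro cm_e[OF fc] cmI x a b)
  also have "\<dots> = (LINT h|M. Pf f (x \<otimes> h \<otimes> a \<otimes> inv h) b)"
  proof (rule Bochner_Integration.integral_cong[OF refl])
    fix h assume "h \<in> space M"
    then have hK: "h \<in> K" using spM topT by simp
    then have h: "h \<in> carrier G" by (rule Kc')
    have "(LINT k|M. f (x \<otimes> h \<otimes> (a \<otimes> k \<otimes> b \<otimes> inv k) \<otimes> inv h))
        = (LINT k|M. f (x \<otimes> h \<otimes> a \<otimes> inv h \<otimes> (h \<otimes> k) \<otimes> b \<otimes> inv (h \<otimes> k)))"
    proof (rule Bochner_Integration.integral_cong[OF refl])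
      fix k assume "k \<in> space M"
      then have k: "k \<in> carrier G" using spM topT Kc by auto
      show "f (x \<otimes> h \<otimes> (a \<otimes> k \<otimes> b \<otimes> inv k) \<otimes> inv h) = f (x \<otimes> h \<otimes> a \<otimes> inv h \<otimes> (h \<otimes> k) \<otimes> b \<otimes> inv (h \<otimes> k))"
        using x a b h k by (simp add: m_assoc inv_mult_group canc1 canc2)
    qed
    also have "\<dots> = (LINT k|M. f (x \<otimes> h \<otimes> a \<otimes> inv h \<otimes> k \<otimes> b \<otimes> inv k))"
      by (rule linv[OF hK, of "\<lambda>k. f (x \<otimes> h \<otimes> a \<otimes> inv h \<otimes> k \<otimes> b \<otimes> inv k)"])
         (intro cm_e[OF fc] cmI x a b h)
    finally show "(LINT k|M. f (x \<otimes> h \<otimes> (a \<otimes> k \<otimes> b \<otimes> inv k) \<otimes> inv h)) = Pf f (x \<otimes> h \<otimes> a \<otimes> inv h) b"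
      by (simp add: Pf_def)
  qed
  finally show ?thesis .
qed

lemma stepC:
  assumes x: "x \<in> carrier G" and a: "a \<in> carrier G" and b: "b \<in> carrier G"
  shows "(LINT k|M. Pf f x (inv (a \<otimes> k \<otimes> b \<otimes> inv k))) = (LINT k|M. Pf f (x \<otimes> k \<otimes> inv b \<otimes> inv k) (inv a))"
proof -
  have "(LINT k|M. Pf f x (inv (a \<otimes> k \<otimes> b \<otimes> inv k))) =
        (LINT k|M. LINT h|M. f (x \<otimes> h \<otimes> inv (a \<otimes> k \<otimes> b \<otimes> inv k) \<otimes> inv h))"
    by (simp add: Pf_def)
  also have "\<dots> = (LINT h|M. LINT k|M. f (x \<otimes> h \<otimes> inv (a \<otimes> k \<otimes> b \<otimes> inv k) \<otimes> inv h))"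
    by (rule fubini[of "\<lambda>h k. f (x \<otimes> h \<otimes> inv (a \<otimes> k \<otimes> b \<otimes> inv k) \<otimes> inv h)"])
       (intro cm_e[OF fc] cmI x a b)
  also have "\<dots> = (LINT h|M. LINT k|M. f (x \<otimes> k \<otimes> inv b \<otimes> inv k \<otimes> h \<otimes> inv a \<otimes> inv h))"
  proof (rule Bochner_Integration.integral_cong[OF refl])
    fix h assume "h \<in> space M"
    then have hK: "h \<in> K" using spM topT by simp
    then have h: "h \<in> carrier G" by (rule Kc')
    have "(LINT k|M. f (x \<otimes> h \<otimes> inv (a \<otimes> k \<otimes> b \<otimes> inv k) \<otimes> inv h))
        = (LINT k|M. f (x \<otimes> (h \<otimes> k) \<otimes> inv b \<otimes> inv (h \<otimes> k) \<otimes> h \<otimes> inv a \<otimes> inv h))"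
    proof (rule Bochner_Integration.integral_cong[OF refl])
      fix k assume "k \<in> space M"
      then have k: "k \<in> carrier G" using spM topT Kc by auto
      show "f (x \<otimes> h \<otimes> inv (a \<otimes> k \<otimes> b \<otimes> inv k) \<otimes> inv h) = f (x \<otimes> (h \<otimes> k) \<otimes> inv b \<otimes> inv (h \<otimes> k) \<otimes> h \<otimes> inv a \<otimes> inv h)"
        using x a b h k by (simp add: m_assoc inv_mult_group canc1 canc2)
    qed
    also have "\<dots> = (LINT k|M. f (x \<otimes> k \<otimes> inv b \<otimes> inv k \<otimes> h \<otimes> inv a \<otimes> inv h))"
      by (rule linv[OF hK, of "\<lambda>k. f (x \<otimes> k \<otimes> inv b \<otimes> inv k \<otimes> h \<otimes> inv a \<otimes> inv h)"])
         (intro cm_e[OF fc] cmI x a b h)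
    finally show "(LINT k|M. f (x \<otimes> h \<otimes> inv (a \<otimes> k \<otimes> b \<otimes> inv k) \<otimes> inv h)) =
        (LINT k|M. f (x \<otimes> k \<otimes> inv b \<otimes> inv k \<otimes> h \<otimes> inv a \<otimes> inv h))" .
  qed
  also have "\<dots> = (LINT k|M. LINT h|M. f (x \<otimes> k \<otimes> inv b \<otimes> inv k \<otimes> h \<otimes> inv a \<otimes> inv h))"
    by (rule fubini[of "\<lambda>h k. f (x \<otimes> k \<otimes> inv b \<otimes> inv k \<otimes> h \<otimes> inv a \<otimes> inv h)", symmetric])
       (intro cm_e[OF fc] cmI x a b)
  also have "\<dots> = (LINT k|M. Pf f (x \<otimes> k \<otimes> inv b \<otimes> inv k) (inv a))"
    by (simp add: Pf_def)
  finally show ?thesis .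
qed

lemma stepD:
  assumes x: "x \<in> carrier G" and c: "c \<in> carrier G" and z: "z \<in> carrier G"
  shows "cmod ((LINT h|M. Pf f (x \<otimes> h \<otimes> c \<otimes> inv h) z) + \<mu> z * (LINT h|M. Pf f (x \<otimes> h \<otimes> c \<otimes> inv h) (inv z))
           - 2 * g z * Pf f x c) \<le> \<delta>"
proof -
  have c1: "continuous_map T euclidean (\<lambda>h. LINT k|M. f (x \<otimes> h \<otimes> c \<otimes> inv h \<otimes> k \<otimes> z \<otimes> inv k))"
    by (rule cont_int[of "\<lambda>k h. f (x \<otimes> h \<otimes> c \<otimes> inv h \<otimes> k \<otimes> z \<otimes> inv k)", simplified])
       (intro cm_e[OF fc] cmI x c z)
  have c2: "continuous_map T euclidean (\<lambda>h. LINT k|M. f (x \<otimes> h \<otimes> c \<otimes> inv h \<otimes> k \<otimes> inv z \<otimes> inv k))"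
    by (rule cont_int[of "\<lambda>k h. f (x \<otimes> h \<otimes> c \<otimes> inv h \<otimes> k \<otimes> inv z \<otimes> inv k)", simplified])
       (intro cm_e[OF fc] cmI x c z)
  have i1: "integrable M (\<lambda>h. Pf f (x \<otimes> h \<otimes> c \<otimes> inv h) z)"
    unfolding Pf_def by (rule integ[OF c1])
  have i2: "integrable M (\<lambda>h. Pf f (x \<otimes> h \<otimes> c \<otimes> inv h) (inv z))"
    unfolding Pf_def by (rule integ[OF c2])
  have i3: "integrable M (\<lambda>h. f (x \<otimes> h \<otimes> c \<otimes> inv h))" by (rule int1[OF fc x c])
  have e1: "2 * g z * Pf f x c = (LINT h|M. 2 * g z * f (x \<otimes> h \<otimes> c \<otimes> inv h))"
    by (simp add: Pf_def)
  have e2: "(LINT h|M. Pf f (x \<otimes> h \<otimes> c \<otimes> inv h) z) + \<mu> z * (LINT h|M. Pf f (x \<otimes> h \<otimes> c \<otimes> inv h) (inv z))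
     = (LINT h|M. Pf f (x \<otimes> h \<otimes> c \<otimes> inv h) z + \<mu> z * Pf f (x \<otimes> h \<otimes> c \<otimes> inv h) (inv z))"
    using i1 i2 by simp
  have "cmod ((LINT h|M. Pf f (x \<otimes> h \<otimes> c \<otimes> inv h) z + \<mu> z * Pf f (x \<otimes> h \<otimes> c \<otimes> inv h) (inv z))
             - (LINT h|M. 2 * g z * f (x \<otimes> h \<otimes> c \<otimes> inv h))) \<le> \<delta>"
  proof (rule int_diff_bound)
    show "integrable M (\<lambda>h. 2 * g z * f (x \<otimes> h \<otimes> c \<otimes> inv h))" using i3 by simp
    show "integrable M (\<lambda>h. Pf f (x \<otimes> h \<otimes> c \<otimes> inv h) z + \<mu> z * Pf f (x \<otimes> h \<otimes> c \<otimes> inv h) (inv z))"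
      using i1 i2 by simp
    fix h assume "h \<in> topspace T"
    then have h: "h \<in> carrier G" using topT Kc by auto
    have w: "x \<otimes> h \<otimes> c \<otimes> inv h \<in> carrier G" using x c h by simp
    show "cmod (Pf f (x \<otimes> h \<otimes> c \<otimes> inv h) z + \<mu> z * Pf f (x \<otimes> h \<otimes> c \<otimes> inv h) (inv z)
             - 2 * g z * f (x \<otimes> h \<otimes> c \<otimes> inv h)) \<le> \<delta>"
      using Hp[OF w z] by (simp add: mult.commute mult.left_commute mult.assoc)
  qed
  then show ?thesis by (simp only: e1 e2)
qed


lemma nb: "norm (a::complex) \<le> r \<Longrightarrow> norm b \<le> s \<Longrightarrow> norm (a + b) \<le> r + s"
  by (meson add_mono norm_triangle_ineq order_trans)

lemma nbm: "norm (a::complex) \<le> r \<Longrightarrow> c \<in> carrier G \<Longrightarrow> norm (\<mu> c * a) \<le> r"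
  by (simp add: norm_mult mu_norm)

lemma nbc: "norm (a::complex) \<le> r \<Longrightarrow> norm ((2 * c) * a) \<le> 2 * norm c * r"
  by (simp add: norm_mult mult_left_mono)

lemma final:
  assumes y: "y \<in> carrier G" and z: "z \<in> carrier G" and unb: "\<not> bounded (f ` carrier G)"
  shows "Pf g y z + \<mu> z * Pf g y (inv z) + Pf g z y + \<mu> z * Pf g (inv z) y = 4 * g y * g z"
proof (rule ccontr)
  define L where "L = Pf g y z + \<mu> z * Pf g y (inv z) + Pf g z y + \<mu> z * Pf g (inv z) y"
  assume "\<not> ?thesis"
  then have nz: "cmod (L - 4 * g y * g z) > 0" by (simp add: L_def)
  define C where "C = 8 * \<delta> + 2 * cmod (g z) * \<delta> + 2 * cmod (g y) * \<delta>"
  have bound: "cmod (f x) \<le> C / (2 * cmod (L - 4 * g y * g z))" if x: "x \<in> carrier G" for x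
  proof -
    define Q where "Q c b = (LINT h|M. Pf f (x \<otimes> h \<otimes> c \<otimes> inv h) b)" for c b
    have A: "cmod (2 * f x * Pf g a b - (Q a b + \<mu> a * \<mu> b * Q (inv b) (inv a))) \<le> \<delta>"
      if a: "a \<in> carrier G" and b: "b \<in> carrier G" for a b
      using stepA[OF x a b] stepB[OF x a b] stepC[OF x a b] by (simp add: Q_def)
    have D: "cmod (Q c b + \<mu> b * Q c (inv b) - 2 * g b * Pf f x c) \<le> \<delta>"
      if c: "c \<in> carrier G" and b: "b \<in> carrier G" for c b
      using stepD[OF x c b] by (simp add: Q_def)
    note A1 = A[OF y z] and A2 = A[OF y inv_closed[OF z]] and A3 = A[OF z y] and A4 = A[OF inv_closed[OF z] y]
    note D1 = D[OF y z] and D2 = D[OF inv_closed[OF y] z] and D3 = D[OF z y] and D4 = D[OF inv_closed[OF z] y]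
    note h1 = Hp[OF x y] and h2 = Hp[OF x z]
    have mz: "\<mu> z * \<mu> (inv z) = 1" by (rule mu_inv[OF z])
    have iden: "2 * f x * L - 8 * f x * g y * g z =
      (2 * f x * Pf g y z - (Q y z + \<mu> y * \<mu> z * Q (inv z) (inv y)))
      + \<mu> z * (2 * f x * Pf g y (inv z) - (Q y (inv z) + \<mu> y * \<mu> (inv z) * Q z (inv y)))
      + (2 * f x * Pf g z y - (Q z y + \<mu> z * \<mu> y * Q (inv y) (inv z)))
      + \<mu> z * (2 * f x * Pf g (inv z) y - (Q (inv z) y + \<mu> (inv z) * \<mu> y * Q (inv y) z))
      + (Q y z + \<mu> z * Q y (inv z) - 2 * g z * Pf f x y)
      + \<mu> y * (Q (inv y) z + \<mu> z * Q (inv y) (inv z) - 2 * g z * Pf f x (inv y))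
      + (Q z y + \<mu> y * Q z (inv y) - 2 * g y * Pf f x z)
      + \<mu> z * (Q (inv z) y + \<mu> y * Q (inv z) (inv y) - 2 * g y * Pf f x (inv z))
      + (2 * g z) * (Pf f x y + \<mu> y * Pf f x (inv y) - 2 * f x * g y)
      + (2 * g y) * (Pf f x z + \<mu> z * Pf f x (inv z) - 2 * f x * g z)"
      unfolding L_def using mz by algebra
    have "cmod (2 * f x * L - 8 * f x * g y * g z) \<le>
        \<delta> + \<delta> + \<delta> + \<delta> + \<delta> + \<delta> + \<delta> + \<delta> + 2 * cmod (g z) * \<delta> + 2 * cmod (g y) * \<delta>"
      unfolding iden
      apply (intro nb nbm nbc)
      using A1 A2 A3 A4 D1 D2 D3 D4 h1 h2 y z by auto
    then have "cmod (2 * f x * L - 8 * f x * g y * g z) \<le> C" by (simp add: C_def)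
    moreover have "cmod (2 * f x * L - 8 * f x * g y * g z) = 2 * cmod (f x) * cmod (L - 4 * g y * g z)"
    proof -
      have "2 * f x * L - 8 * f x * g y * g z = 2 * f x * (L - 4 * g y * g z)" by (simp add: algebra_simps)
      then show ?thesis by (simp add: norm_mult)
    qed
    ultimately have "cmod (f x) * (2 * cmod (L - 4 * g y * g z)) \<le> C" by (simp add: mult_ac)
    then show ?thesis using nz by (simp add: pos_le_divide_eq)
  qed
  then have "bounded (f ` carrier G)" unfolding bounded_iff by blast
  with unb show False by simp
qed

end


theorem lemma5p4:
  fixes G :: "('a, 'b) monoid_scheme" and X :: "'a topology"
    and K :: "'a set" and M :: "'a measure"
    and \<mu> f g :: "'a \<Rightarrow> complex" and \<delta> :: real
  assumes "locally_compact_group G X"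
    and "subgroup K G" and "compactin X K"
    and "normalized_haar G X K M"
    and "\<delta> > 0"
    and "unitary_character G X \<mu>"
    and "continuous_map X euclidean f" and "continuous_map X euclidean g"
    and "\<not> bounded (f ` carrier G)"
    and "\<forall>x\<in>carrier G. \<forall>y\<in>carrier G.
           cmod ((LINT k|M. f (x \<otimes>\<^bsub>G\<^esub> k \<otimes>\<^bsub>G\<^esub> y \<otimes>\<^bsub>G\<^esub> inv\<^bsub>G\<^esub> k))
               + \<mu> y * (LINT k|M. f (x \<otimes>\<^bsub>G\<^esub> k \<otimes>\<^bsub>G\<^esub> inv\<^bsub>G\<^esub> y \<otimes>\<^bsub>G\<^esub> inv\<^bsub>G\<^esub> k))
               - 2 * f x * g y) \<le> \<delta>"
  shows "\<forall>x\<in>carrier G. \<forall>y\<in>carrier G.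
           (LINT k|M. g (x \<otimes>\<^bsub>G\<^esub> k \<otimes>\<^bsub>G\<^esub> y \<otimes>\<^bsub>G\<^esub> inv\<^bsub>G\<^esub> k))
           + \<mu> y * (LINT k|M. g (x \<otimes>\<^bsub>G\<^esub> k \<otimes>\<^bsub>G\<^esub> inv\<^bsub>G\<^esub> y \<otimes>\<^bsub>G\<^esub> inv\<^bsub>G\<^esub> k))
           + (LINT k|M. g (y \<otimes>\<^bsub>G\<^esub> k \<otimes>\<^bsub>G\<^esub> x \<otimes>\<^bsub>G\<^esub> inv\<^bsub>G\<^esub> k))
           + \<mu> y * (LINT k|M. g (inv\<^bsub>G\<^esub> y \<otimes>\<^bsub>G\<^esub> k \<otimes>\<^bsub>G\<^esub> x \<otimes>\<^bsub>G\<^esub> inv\<^bsub>G\<^esub> k))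
           = 4 * g x * g y"
  proof -
  interpret mainloc G X K M \<mu> f g \<delta>
    apply (rule mainloc.intro)
     apply (rule setting.intro)
        apply (fact assms)+
    apply (rule mainloc_axioms.intro)
       apply (fact assms)+
    done
  show ?thesis
  proof (intro ballI)
    fix x y assume x: "x \<in> carrier G" and y: "y \<in> carrier G"
    from final[OF x y assms(9)] show "(LINT k|M. g (x \<otimes>\<^bsub>G\<^esub> k \<otimes>\<^bsub>G\<^esub> y \<otimes>\<^bsub>G\<^esub> inv\<^bsub>G\<^esub> k))
           + \<mu> y * (LINT k|M. g (x \<otimes>\<^bsub>G\<^esub> k \<otimes>\<^bsub>G\<^esub> inv\<^bsub>G\<^esub> y \<otimes>\<^bsub>G\<^esub> inv\<^bsub>G\<^esub> k))
           + (LINT k|M. g (y \<otimes>\<^bsub>G\<^esub> k \<otimes>\<^bsub>G\<^esub> x \<otimes>\<^bsub>G\<^esub> inv\<^bsub>G\<^esub> k))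
           + \<mu> y * (LINT k|M. g (inv\<^bsub>G\<^esub> y \<otimes>\<^bsub>G\<^esub> k \<otimes>\<^bsub>G\<^esub> x \<otimes>\<^bsub>G\<^esub> inv\<^bsub>G\<^esub> k))
           = 4 * g x * g y"
      by (simp add: Pf_def)
  qed
qed

end
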